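(* For every integer $k\geq 1$, the following identity of formal power series in $q$ holds: \[ (q;q)_{\infty}\sum_{i=0}^{\infty}\frac{q^{i}}{(q;q)_i^{k+1}}=\sum_{i_1=0}^{\infty}\cdots\sum_{i_k=0}^{\infty}\frac{q^{\sum_{j=1}^k (i_j+i_j^2)+\sum_{s=2}^k \sum_{j=s}^k i_{s-1}i_j}}{\prod_{j=1}^k (q;q)_{i_j}\,(q;q)_{\sum_{s=1}^j i_s}}. \]
   Context: Notation: $(a;q)_n=\prod_{j=0}^{n-1}(1-aq^j)$ (so $(q;q)_0=1$) and $(q;q)_\infty=\prod_{j\ge 1}(1-q^j)$. *)

theory Defs
  imports "HOL-Analysis.Analysis" "HOL-Computational_Algebra.Formal_Power_Series"
begin

definition qpoch :: "nat \<Rightarrow> rat fps" where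
  "qpoch n = (\<Prod>j=1..n. 1 - fps_X ^ j)"

definition qpoch_inf :: "rat fps" where
  "qpoch_inf = lim qpoch"

text \<open>Exponent of the summand indexed by (i_1,...,i_k) = xs (0-indexed list of length k).\<close>
definition rhs_exp :: "nat list \<Rightarrow> nat" where
  "rhs_exp xs = (\<Sum>j<length xs. xs!j + (xs!j)^2)
      + (\<Sum>s\<in>{1..<length xs}. \<Sum>j\<in>{s..<length xs}. xs!(s-1) * xs!j)"

definition rhs_den :: "nat list \<Rightarrow> rat fps" where
  "rhs_den xs = (\<Prod>j<length xs. qpoch (xs!j) * qpoch (\<Sum>s\<le>j. xs!s))"

definition rhs_term :: "nat list \<Rightarrow> rat fps" where
  "rhs_term xs = fps_X ^ rhs_exp xs / rhs_den xs"

end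

theory Submission
  imports Defs
begin

definition eqt :: "nat \<Rightarrow> rat fps \<Rightarrow> rat fps \<Rightarrow> bool" where
  "eqt n f g \<longleftrightarrow> (\<forall>m\<le>n. fps_nth f m = fps_nth g m)"

lemma eqt_refl[simp]: "eqt n f f" by (simp add: eqt_def)
lemma eqt_sym: "eqt n f g \<Longrightarrow> eqt n g f" by (simp add: eqt_def)
lemma eqt_trans: "eqt n f g \<Longrightarrow> eqt n g h \<Longrightarrow> eqt n f h" by (simp add: eqt_def)
lemma eqt_mono: "eqt n f g \<Longrightarrow> m \<le> n \<Longrightarrow> eqt m f g" by (simp add: eqt_def)
lemma eqt_add: "eqt n f g \<Longrightarrow> eqt n f' g' \<Longrightarrow> eqt n (f + f') (g + g')" by (simp add: eqt_def)
lemma eqt_diff: "eqt n f g \<Longrightarrow> eqt n f' g' \<Longrightarrow> eqt n (f - f') (g - g')" by (simp add: eqt_def)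
lemma eqt_mult: assumes "eqt n f g" "eqt n f' g'" shows "eqt n (f * f') (g * g')"
  unfolding eqt_def
proof (intro allI impI)
  fix m assume m: "m \<le> n"
  show "fps_nth (f * f') m = fps_nth (g * g') m" unfolding fps_mult_nth
    by (rule sum.cong) (use assms m in \<open>auto simp: eqt_def\<close>)
qed
lemma eqt_sum: "(\<And>x. x \<in> A \<Longrightarrow> eqt n (f x) (g x)) \<Longrightarrow> eqt n (sum f A) (sum g A)"
  by (induction A rule: infinite_finite_induct) (auto intro: eqt_add)
lemma eqt_sum_subset:
  assumes "finite A" "A' \<subseteq> A" "\<And>x. x \<in> A - A' \<Longrightarrow> eqt n (f x) 0"
  shows "eqt n (sum f A) (sum f A')"
proof -
  have "sum f A = sum f A' + sum f (A - A')"
    using assms by (metis add.commute sum.subset_diff)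
  moreover have "eqt n (sum f (A - A')) (sum (\<lambda>_. 0) (A - A'))"
    by (rule eqt_sum) (use assms in auto)
  ultimately show ?thesis using eqt_add[OF eqt_refl[of n "sum f A'"]] by fastforce
qed
lemma eqt_Xpow: "n < e \<Longrightarrow> eqt n (fps_X ^ e * h) 0"
  by (simp add: eqt_def fps_X_power_mult_nth)
lemma eqt_ext: "(\<And>n. eqt n f g) \<Longrightarrow> f = g"
  by (auto simp: eqt_def fps_eq_iff)

lemma qpoch_0[simp]: "qpoch 0 = 1" by (simp add: qpoch_def)
lemma qpoch_Suc: "qpoch (Suc n) = qpoch n * (1 - fps_X ^ Suc n)"
  by (simp add: qpoch_def prod.cl_ivl_Suc)
lemma qpoch_nth0[simp]: "fps_nth (qpoch n) 0 = 1"
  by (induction n) (simp_all add: qpoch_Suc)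

definition iq :: "nat \<Rightarrow> rat fps" where "iq n = inverse (qpoch n)"

lemma iq_0[simp]: "iq 0 = 1" by (simp add: iq_def)
lemma qpoch_iq[simp]: "qpoch n * iq n = 1"
  unfolding iq_def by (rule inverse_mult_eq_1') simp
lemma iq_Suc: "iq (Suc n) * (1 - fps_X ^ Suc n) = iq n"
proof -
  have h: "fps_nth (1 - fps_X ^ Suc n :: rat fps) 0 = 1" by simp
  have "iq (Suc n) = iq n * inverse (1 - fps_X ^ Suc n)"
    unfolding iq_def qpoch_Suc by (simp add: fps_inverse_mult)
  then show ?thesis using inverse_mult_eq_1[of "1 - fps_X ^ Suc n :: rat fps"] h
    by (simp add: mult.assoc)
qed

lemma euler_fin: "(\<Sum>m\<le>B. fps_X ^ m * iq m) = iq B"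
proof (induction B)
  case (Suc B)
  have "(\<Sum>m\<le>Suc B. fps_X ^ m * iq m) = iq B + fps_X ^ Suc B * iq (Suc B)"
    using Suc by (simp only: sum.atMost_Suc)
  also have "\<dots> = iq (Suc B) * (1 - fps_X ^ Suc B) + fps_X ^ Suc B * iq (Suc B)"
    by (simp only: iq_Suc)
  also have "\<dots> = iq (Suc B)" by (simp add: algebra_simps)
  finally show ?case .
qed simp

lemma qpoch_trunc: "n \<le> B \<Longrightarrow> eqt n (qpoch B) (qpoch n)"
proof (induction B rule: dec_induct)
  case (step B)
  have "qpoch (Suc B) = qpoch B - fps_X ^ Suc B * qpoch B"
    by (simp add: qpoch_Suc algebra_simps)
  moreover have "eqt n (qpoch B - fps_X ^ Suc B * qpoch B) (qpoch n - 0)"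
    by (rule eqt_diff[OF step(3) eqt_Xpow]) (use step in auto)
  ultimately show ?case by simp
qed simp


definition RR :: "nat \<Rightarrow> nat \<Rightarrow> rat fps" where
  "RR n M = (\<Sum>i\<le>n. fps_X ^ (i^2 + i*M) * iq i * iq (n - i) * iq (M + i))"

lemma iq_Suc': "iq n = iq (Suc n) * (1 - fps_X ^ Suc n)" by (rule sym, rule iq_Suc)

lemma pw_split:
  assumes "i \<le> Suc n"
  shows "iq i * iq (Suc n - i) * (1 - fps_X ^ Suc n) =
    (if i = 0 then 0 else iq (i - 1) * iq (Suc n - i)) +
    (if i = Suc n then 0 else fps_X ^ i * iq i * iq (n - i))"
proof (cases "i = 0")
  case True then show ?thesis by (simp add: iq_Suc del: power_Suc)
next
  case False
  show ?thesis
  proof (cases "i = Suc n")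
    case True then show ?thesis using False by (simp add: iq_Suc del: power_Suc)
  next
    case F2: False
    obtain j where j: "i = Suc j" using False not0_implies_Suc by blast
    have e: "Suc n - i = Suc (n - i)" using assms F2 by auto
    have xp: "(fps_X::rat fps) ^ Suc n = fps_X ^ i * fps_X ^ Suc (n - i)"
      using assms F2 by (simp add: power_add[symmetric] del: power_Suc)
    have "iq i * iq (Suc n - i) * (1 - fps_X ^ Suc n) =
        (iq i * (1 - fps_X ^ i)) * iq (Suc n - i) + fps_X ^ i * iq i * (iq (Suc (n - i)) * (1 - fps_X ^ Suc (n - i)))"
      unfolding xp e by (simp add: algebra_simps)
    also have "\<dots> = iq (i - 1) * iq (Suc n - i) + fps_X ^ i * iq i * iq (n - i)"
      using iq_Suc[of j] iq_Suc[of "n - i"] j by simp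
    finally show ?thesis using False F2 by simp
  qed
qed

lemma RR_eq: "RR n M = iq n * iq (n + M)"
proof (induction n arbitrary: M)
  case 0 then show ?case by (simp add: RR_def)
next
  case (Suc n)
  define A where "A i = fps_X ^ (i^2 + i*M) * iq (M + i) * (if i = 0 then 0 else iq (i - 1) * iq (Suc n - i))" for i
  define B where "B i = fps_X ^ (i^2 + i*M) * iq (M + i) * (if i = Suc n then 0 else fps_X ^ i * iq i * iq (n - i))" for i
  have "(1 - fps_X ^ Suc n) * RR (Suc n) M =
      (\<Sum>i\<le>Suc n. fps_X ^ (i^2 + i*M) * iq (M + i) * (iq i * iq (Suc n - i) * (1 - fps_X ^ Suc n)))"
    unfolding RR_def sum_distrib_left by (rule sum.cong) (simp_all add: algebra_simps)
  also have "\<dots> = (\<Sum>i\<le>Suc n. A i + B i)"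
  proof (rule sum.cong)
    fix i assume "i \<in> {..Suc n}"
    then have h: "i \<le> Suc n" by simp
    show "fps_X ^ (i^2 + i*M) * iq (M + i) * (iq i * iq (Suc n - i) * (1 - fps_X ^ Suc n)) = A i + B i"
      unfolding A_def B_def by (simp only: pw_split[OF h] distrib_left)
  qed simp
  also have "\<dots> = (\<Sum>i\<le>n. A (Suc i) + B i)"
    by (simp only: sum.distrib sum.atMost_Suc_shift[of A] sum.atMost_Suc[of B]) (simp add: A_def B_def)
  also have "\<dots> = (\<Sum>i\<le>n. fps_X ^ (i^2 + i * Suc M) * iq i * iq (n - i) * iq (Suc M + i))"
  proof (rule sum.cong)
    fix i assume i: "i \<in> {..n}"
    have ex: "(fps_X::rat fps) ^ ((Suc i)^2 + Suc i * M) = fps_X ^ (i^2 + i * M) * fps_X ^ i * fps_X ^ Suc (M + i)"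
      by (simp add: power_add[symmetric] power2_eq_square algebra_simps del: power_Suc)
    have ex2: "(fps_X::rat fps) ^ (i^2 + i * Suc M) = fps_X ^ (i^2 + i * M) * fps_X ^ i"
      by (simp add: power_add[symmetric] algebra_simps del: power_Suc)
    have "A (Suc i) + B i = fps_X ^ (i^2 + i * M) * fps_X ^ i * iq i * iq (n - i) *
        (fps_X ^ Suc (M + i) * iq (Suc (M + i)) + iq (M + i))"
      using i unfolding A_def B_def ex by (simp add: algebra_simps del: power_Suc)
    also have "\<dots> = fps_X ^ (i^2 + i * M) * fps_X ^ i * iq i * iq (n - i) * iq (Suc (M + i))"
      by (subst iq_Suc'[of "M + i"]) (simp add: algebra_simps del: power_Suc)
    finally show "A (Suc i) + B i = fps_X ^ (i^2 + i * Suc M) * iq i * iq (n - i) * iq (Suc M + i)"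
      unfolding ex2 by simp
  qed simp
  also have "\<dots> = iq n * iq (n + Suc M)" using Suc.IH[of "Suc M"] by (simp add: RR_def)
  also have "\<dots> = (1 - fps_X ^ Suc n) * (iq (Suc n) * iq (Suc n + M))"
    by (subst iq_Suc'[of n]) (simp add: algebra_simps del: power_Suc)
  finally have "(1 - fps_X ^ Suc n) * RR (Suc n) M = (1 - fps_X ^ Suc n) * (iq (Suc n) * iq (Suc n + M))" .
  moreover have "(1 - fps_X ^ Suc n :: rat fps) \<noteq> 0"
  proof
    assume "(1 - fps_X ^ Suc n :: rat fps) = 0"
    then have "fps_nth (1 - fps_X ^ Suc n :: rat fps) 0 = 0" by simp
    then show False by simp
  qed
  ultimately show ?case by simp
qed


fun ee :: "nat \<Rightarrow> nat list \<Rightarrow> nat" where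
  "ee M [] = 0"
| "ee M (x # xs) = x * (M + x + 1) + ee (M + x) xs"

fun dd :: "nat \<Rightarrow> nat list \<Rightarrow> rat fps" where
  "dd M [] = 1"
| "dd M (x # xs) = iq x * iq (M + x) * dd (M + x) xs"

definition tm :: "nat \<Rightarrow> nat list \<Rightarrow> rat fps" where
  "tm M xs = fps_X ^ ee M xs * dd M xs"

definition LL :: "nat \<Rightarrow> nat \<Rightarrow> nat list set" where
  "LL k B = {xs. set xs \<subseteq> {..B} \<and> length xs = k}"

lemma finite_LL[simp]: "finite (LL k B)"
  unfolding LL_def by (rule finite_lists_length_eq) simp

lemma ee_ge: "x \<in> set xs \<Longrightarrow> x \<le> ee M xs"
proof (induction xs arbitrary: M)
  case (Cons y ys)
  then show ?case by (auto simp: algebra_simps) (metis add.commute trans_le_add2)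
qed simp

lemma tm_Cons: "tm M (x # xs) = (fps_X ^ (x * (M + x + 1)) * iq x * iq (M + x)) * tm (M + x) xs"
  by (simp add: tm_def power_add algebra_simps)

lemma LL_Suc: "LL (Suc k) B = (\<lambda>(i, ys). i # ys) ` ({..B} \<times> LL k B)"
proof (rule set_eqI)
  fix xs show "xs \<in> LL (Suc k) B \<longleftrightarrow> xs \<in> (\<lambda>(i, ys). i # ys) ` ({..B} \<times> LL k B)"
    by (cases xs) (auto simp: LL_def)
qed

lemma sum_LL_Suc:
  "sum (tm M) (LL (Suc k) B) = (\<Sum>i\<le>B. (fps_X ^ (i * (M + i + 1)) * iq i * iq (M + i)) * sum (tm (M + i)) (LL k B))"
proof -
  have inj: "inj_on (\<lambda>(i, ys). i # ys) ({..B} \<times> LL k B)" by (auto simp: inj_on_def)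
  have "sum (tm M) (LL (Suc k) B) = (\<Sum>(i, ys)\<in>{..B} \<times> LL k B. tm M (i # ys))"
    unfolding LL_Suc by (subst sum.reindex[OF inj]) (simp add: case_prod_unfold)
  also have "\<dots> = (\<Sum>i\<le>B. \<Sum>ys\<in>LL k B. tm M (i # ys))"
    by (rule sum.cartesian_product[symmetric])
  also have "\<dots> = (\<Sum>i\<le>B. (fps_X ^ (i * (M + i + 1)) * iq i * iq (M + i)) * sum (tm (M + i)) (LL k B))"
    by (simp add: tm_Cons sum_distrib_left)
  finally show ?thesis .
qed

lemma LL_0: "LL 0 B = {[]}" by (auto simp: LL_def)

definition GG :: "nat \<Rightarrow> nat \<Rightarrow> nat \<Rightarrow> rat fps" where
  "GG k M B = (\<Sum>m\<le>B. fps_X ^ m * iq m * iq (m + M) ^ k)"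

lemma claimP: "n \<le> B \<Longrightarrow> eqt n (sum (tm M) (LL k B)) (qpoch B * GG k M B)"
proof (induction k arbitrary: M)
  case 0
  have "qpoch B * GG 0 M B = 1" by (simp add: GG_def euler_fin)
  then show ?case by (simp add: LL_0 tm_def)
next
  case (Suc k)
  define F where "F i m = fps_X ^ (i * (M + i + 1) + m) * iq i * iq (M + i) * iq m * iq (m + M + i) ^ k" for i m
  have "eqt n (sum (tm M) (LL (Suc k) B))
      (\<Sum>i\<le>B. (fps_X ^ (i * (M + i + 1)) * iq i * iq (M + i)) * (qpoch B * GG k (M + i) B))"
    unfolding sum_LL_Suc by (intro eqt_sum eqt_mult eqt_refl Suc.IH Suc.prems)
  also have "(\<Sum>i\<le>B. (fps_X ^ (i * (M + i + 1)) * iq i * iq (M + i)) * (qpoch B * GG k (M + i) B))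
      = qpoch B * (\<Sum>(i, m)\<in>{..B} \<times> {..B}. F i m)"
    unfolding GG_def sum.cartesian_product[symmetric] sum_distrib_left F_def
    by (intro sum.cong refl) (simp add: power_add algebra_simps)
  finally have 1: "eqt n (sum (tm M) (LL (Suc k) B)) (qpoch B * (\<Sum>(i, m)\<in>{..B} \<times> {..B}. F i m))" .
  have 2: "eqt n (\<Sum>(i, m)\<in>{..B} \<times> {..B}. F i m) (\<Sum>(i, m)\<in>{(i,m). i + m \<le> B}. F i m)"
  proof (rule eqt_sum_subset)
    show "{(i, m). i + m \<le> B} \<subseteq> {..B} \<times> {..B}" by auto
    fix x assume x: "x \<in> {..B} \<times> {..B} - {(i, m). i + m \<le> B}"
    obtain i m where im: "x = (i, m)" by force
    have "n < i * (M + i + 1) + m" using x im Suc.prems by auto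
    then show "eqt n (case x of (i, m) \<Rightarrow> F i m) 0"
      unfolding im F_def by (simp add: mult.assoc eqt_Xpow)
  qed simp
  have 3: "(\<Sum>(i, m)\<in>{(i,m). i + m \<le> B}. F i m) = GG (Suc k) M B"
  proof -
    have "(\<Sum>(i, m)\<in>{(i,m). i + m \<le> B}. F i m) = (\<Sum>p\<le>B. \<Sum>i\<le>p. F i (p - i))"
      by (rule sum.triangle_reindex_eq)
    also have "\<dots> = (\<Sum>p\<le>B. fps_X ^ p * (\<Sum>i\<le>p. fps_X ^ (i^2 + i*M) * iq i * iq (p - i) * iq (M + i)) * iq (p + M) ^ k)"
      unfolding sum_distrib_left sum_distrib_right
    proof (intro sum.cong refl)
      fix p i assume "p \<in> {..B}" "i \<in> {..p}"
      then have ip: "i \<le> p" by simp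
      have e: "i * (M + i + 1) + (p - i) = p + (i^2 + i * M)" using ip by (simp add: power2_eq_square algebra_simps)
      have e2: "p - i + M + i = p + M" using ip by simp
      show "F i (p - i) = fps_X ^ p * (fps_X ^ (i\<^sup>2 + i * M) * iq i * iq (p - i) * iq (M + i)) * iq (p + M) ^ k"
        unfolding F_def e e2 by (simp add: power_add algebra_simps)
    qed
    also have "\<dots> = GG (Suc k) M B"
      unfolding GG_def RR_def[symmetric] RR_eq by (intro sum.cong refl) (simp add: algebra_simps)
    finally show ?thesis .
  qed
  show ?case using eqt_trans[OF 1 eqt_mult[OF eqt_refl 2]] 3 by simp
qed


lemma ee_snoc: "ee M (xs @ [y]) = ee M xs + y * (M + sum_list xs + y + 1)"
  by (induction xs arbitrary: M) (simp_all add: algebra_simps)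

lemma dd_snoc: "dd M (xs @ [y]) = dd M xs * (iq y * iq (M + sum_list xs + y))"
  by (induction xs arbitrary: M) (simp_all add: algebra_simps)

lemma rhs_exp_snoc: "rhs_exp (xs @ [y]) = rhs_exp xs + y * (sum_list xs + y + 1)"
proof -
  let ?L = "length xs"
  let ?z = "xs @ [y]"
  have A: "(\<Sum>j<length ?z. ?z!j + (?z!j)^2) = (\<Sum>j<?L. xs!j + (xs!j)^2) + (y + y^2)"
    by (simp add: nth_append)
  have inner: "(\<Sum>j\<in>{s..<length ?z}. ?z!(s-1) * ?z!j) = (\<Sum>j\<in>{s..<?L}. xs!(s-1) * xs!j) + xs!(s-1) * y"
    if s: "s \<in> {1..<length ?z}" for s
  proof -
    have sL: "s \<le> ?L" using s by simp
    then have "(\<Sum>j\<in>{s..<Suc ?L}. ?z!(s-1) * ?z!j) = (\<Sum>j\<in>{s..<?L}. ?z!(s-1) * ?z!j) + ?z!(s-1) * ?z!?L"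
      by (rule sum.atLeastLessThan_Suc)
    moreover have "(\<Sum>j\<in>{s..<?L}. ?z!(s-1) * ?z!j) = (\<Sum>j\<in>{s..<?L}. xs!(s-1) * xs!j)"
      using s by (intro sum.cong refl) (auto simp: nth_append)
    moreover have "?z!(s-1) = xs!(s-1)" using s by (auto simp: nth_append)
    ultimately show ?thesis using sL by simp
  qed
  have B1: "(\<Sum>s\<in>{1..<length ?z}. \<Sum>j\<in>{s..<?L}. xs!(s-1) * xs!j) = (\<Sum>s\<in>{1..<?L}. \<Sum>j\<in>{s..<?L}. xs!(s-1) * xs!j)"
  proof (cases ?L)
    case 0 then show ?thesis by simp
  next
    case (Suc l)
    then show ?thesis by (simp add: sum.atLeastLessThan_Suc)
  qed
  have B2: "(\<Sum>s\<in>{1..<length ?z}. xs!(s-1) * y) = sum_list xs * y"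
  proof -
    have "(\<Sum>s\<in>{1..<Suc ?L}. xs!(s-1) * y) = (\<Sum>s\<in>{0..<?L}. xs!s * y)"
      using sum.shift_bounds_Suc_ivl[of "\<lambda>s. xs!(s-1) * y" 0 ?L] by simp
    also have "\<dots> = sum_list xs * y" by (simp add: sum_list_sum_nth sum_distrib_right)
    finally show ?thesis by simp
  qed
  have "rhs_exp ?z = (\<Sum>j<?L. xs!j + (xs!j)^2) + (y + y^2) +
      ((\<Sum>s\<in>{1..<length ?z}. \<Sum>j\<in>{s..<?L}. xs!(s-1) * xs!j) + (\<Sum>s\<in>{1..<length ?z}. xs!(s-1) * y))"
    unfolding rhs_exp_def A sum.distrib[symmetric] by (intro arg_cong2[where f="(+)"] refl sum.cong) (use inner in auto)
  also have "\<dots> = rhs_exp xs + y * (sum_list xs + y + 1)"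
    unfolding B1 B2 rhs_exp_def by (simp add: power2_eq_square algebra_simps)
  finally show ?thesis .
qed

lemma rhs_den_snoc: "rhs_den (xs @ [y]) = rhs_den xs * (qpoch y * qpoch (sum_list xs + y))"
proof -
  let ?L = "length xs"
  let ?z = "xs @ [y]"
  have s: "(\<Sum>s\<le>j. ?z!s) = (\<Sum>s\<le>j. xs!s)" if "j < ?L" for j
    using that by (intro sum.cong refl) (auto simp: nth_append)
  have s2: "(\<Sum>s\<le>?L. ?z!s) = sum_list xs + y"
  proof -
    have "(\<Sum>s\<le>?L. ?z!s) = (\<Sum>s<?L. ?z!s) + y" by (simp add: lessThan_Suc_atMost[symmetric])
    also have "(\<Sum>s<?L. ?z!s) = (\<Sum>s<?L. xs!s)" by (intro sum.cong refl) (auto simp: nth_append)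
    also have "\<dots> = sum_list xs" by (simp add: sum_list_sum_nth atLeast0LessThan)
    finally show ?thesis .
  qed
  have "rhs_den ?z = (\<Prod>j<?L. qpoch (?z!j) * qpoch (\<Sum>s\<le>j. ?z!s)) * (qpoch (?z!?L) * qpoch (\<Sum>s\<le>?L. ?z!s))"
    unfolding rhs_den_def by (simp add: prod.lessThan_Suc)
  also have "(\<Prod>j<?L. qpoch (?z!j) * qpoch (\<Sum>s\<le>j. ?z!s)) = rhs_den xs"
    unfolding rhs_den_def by (intro prod.cong refl) (simp add: s nth_append)
  finally show ?thesis unfolding s2 by simp
qed

lemma rhs_den_nth0: "fps_nth (rhs_den xs) 0 \<noteq> 0"
  by (induction xs rule: rev_induct) (simp_all add: rhs_den_snoc, simp add: rhs_den_def)

lemma rhs_exp_ee: "rhs_exp xs = ee 0 xs"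
  by (induction xs rule: rev_induct) (simp_all add: rhs_exp_snoc ee_snoc, simp add: rhs_exp_def)

lemma rhs_den_dd: "inverse (rhs_den xs) = dd 0 xs"
proof (induction xs rule: rev_induct)
  case Nil then show ?case by (simp add: rhs_den_def)
next
  case (snoc y xs)
  then show ?case by (simp add: rhs_den_snoc dd_snoc fps_inverse_mult iq_def)
qed

lemma rhs_term_tm: "rhs_term xs = tm 0 xs"
  unfolding rhs_term_def tm_def
  by (simp add: fps_divide_unit rhs_den_nth0 rhs_exp_ee rhs_den_dd)


lemma seq_trunc:
  assumes "\<And>n B. n < B \<Longrightarrow> eqt n (g B) (h n)"
  shows "g \<longlonglongrightarrow> Abs_fps (\<lambda>n. fps_nth (h n) n)"
    and "eqt n (Abs_fps (\<lambda>n. fps_nth (h n) n)) (h n)"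
proof -
  show "g \<longlonglongrightarrow> Abs_fps (\<lambda>n. fps_nth (h n) n)"
  proof (rule tendsto_fpsI)
    fix m show "\<forall>\<^sub>F x in sequentially. fps_nth (g x) m = fps_nth (Abs_fps (\<lambda>n. fps_nth (h n) n)) m"
      unfolding eventually_sequentially
      by (rule exI[of _ "Suc m"]) (use assms in \<open>auto simp: eqt_def\<close>)
  qed
  show "eqt n (Abs_fps (\<lambda>n. fps_nth (h n) n)) (h n)"
    unfolding eqt_def
  proof (intro allI impI)
    fix m assume m: "m \<le> n"
    have "eqt m (g (Suc n)) (h m)" using assms m by auto
    moreover have "eqt m (g (Suc n)) (h n)" using assms[of n "Suc n"] eqt_mono m by auto
    ultimately show "fps_nth (Abs_fps (\<lambda>n. fps_nth (h n) n)) m = fps_nth (h n) m"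
      by (simp add: eqt_def)
  qed
qed

lemma fam_trunc:
  assumes fin: "\<And>n. finite (C n)" and sub: "\<And>n. C n \<subseteq> A"
    and z: "\<And>n a. a \<in> A - C n \<Longrightarrow> eqt n (f a) 0"
  shows "(f has_sum Abs_fps (\<lambda>n. fps_nth (sum f (C n)) n)) A"
    and "eqt n (Abs_fps (\<lambda>n. fps_nth (sum f (C n)) n)) (sum f (C n))"
proof -
  have key: "eqt n (sum f Y) (sum f (C n))" if "finite Y" "C n \<subseteq> Y" "Y \<subseteq> A" for Y n
    by (rule eqt_sum_subset) (use that z in auto)
  show "(f has_sum Abs_fps (\<lambda>n. fps_nth (sum f (C n)) n)) A"
    unfolding has_sum_def
  proof (rule tendsto_fpsI)
    fix m show "\<forall>\<^sub>F Y in finite_subsets_at_top A. fps_nth (sum f Y) m = fps_nth (Abs_fps (\<lambda>n. fps_nth (sum f (C n)) n)) m"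
      unfolding eventually_finite_subsets_at_top
      by (rule exI[of _ "C m"]) (use fin sub key in \<open>auto simp: eqt_def\<close>)
  qed
  show "eqt n (Abs_fps (\<lambda>n. fps_nth (sum f (C n)) n)) (sum f (C n))"
    unfolding eqt_def
  proof (intro allI impI)
    fix m assume m: "m \<le> n"
    have "eqt m (sum f (C m \<union> C n)) (sum f (C m))" by (rule key) (use fin sub in auto)
    moreover have "eqt m (sum f (C m \<union> C n)) (sum f (C n))"
      by (rule eqt_mono[OF key m]) (use fin sub in auto)
    ultimately show "fps_nth (Abs_fps (\<lambda>n. fps_nth (sum f (C n)) n)) m = fps_nth (sum f (C n)) m"
      by (simp add: eqt_def)
  qed
qed

theorem mainTheorem4:
  fixes k :: nat
  assumes "k \<ge> 1"
  shows "convergent qpoch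
    \<and> summable (\<lambda>i. fps_X ^ i / qpoch i ^ (k + 1))
    \<and> rhs_term summable_on {xs. length xs = k}
    \<and> qpoch_inf * (\<Sum>i. fps_X ^ i / qpoch i ^ (k + 1))
        = (\<Sum>\<^sub>\<infinity> xs\<in>{xs. length xs = k}. rhs_term xs)"
proof -
  define Q where "Q = Abs_fps (\<lambda>n. fps_nth (qpoch n) n)"
  have qlim: "qpoch \<longlonglongrightarrow> Q" and qtr: "\<And>n. eqt n Q (qpoch n)"
    unfolding Q_def using seq_trunc[of qpoch qpoch] qpoch_trunc by auto
  have conv: "convergent qpoch" using qlim by (rule convergentI)
  have qinf: "qpoch_inf = Q" unfolding qpoch_inf_def using qlim by (rule limI)
  define f where "f i = (fps_X ^ i / qpoch i ^ (k + 1) :: rat fps)" for i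
  have f_eq: "f i = fps_X ^ i * (iq i * iq (i + 0) ^ k)" for i
    unfolding f_def iq_def
    by (simp add: fps_divide_unit fps_power_zeroth fps_inverse_power fps_inverse_mult)
  define h where "h n = (\<Sum>i\<le>n. f i)" for n
  have htr: "eqt n (\<Sum>i<B. f i) (h n)" if "n < B" for n B
  proof -
    have "{..<B} = {..n} \<union> {n<..<B}" using that by auto
    have "eqt n (\<Sum>i\<in>{..<B}. f i) (\<Sum>i\<in>{..n}. f i)"
      by (rule eqt_sum_subset) (use that in \<open>auto simp: f_eq intro!: eqt_Xpow\<close>)
    then show ?thesis by (simp add: h_def)
  qed
  define S where "S = Abs_fps (\<lambda>n. fps_nth (h n) n)"
  have slim: "(\<lambda>B. \<Sum>i<B. f i) \<longlonglongrightarrow> S" and str: "\<And>n. eqt n S (h n)"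
    unfolding S_def using seq_trunc[of "\<lambda>B. \<Sum>i<B. f i" h] htr by auto
  have fsums: "f sums S" unfolding sums_def using slim .
  define A where "A = {xs :: nat list. length xs = k}"
  define R where "R = Abs_fps (\<lambda>n. fps_nth (sum rhs_term (LL k n)) n)"
  have zz: "eqt n (rhs_term xs) 0" if xsA: "xs \<in> A - LL k n" for n xs
  proof -
    obtain x where x: "x \<in> set xs" "n < x" using xsA by (force simp: A_def LL_def subset_iff not_le)
    have "n < ee 0 xs" using ee_ge[OF x(1), of 0] x(2) by simp
    then show ?thesis by (simp add: rhs_term_tm tm_def eqt_Xpow)
  qed
  have rsum: "(rhs_term has_sum R) A" and rtr: "\<And>n. eqt n R (sum rhs_term (LL k n))"
  proof -
    have sub: "\<And>n. LL k n \<subseteq> A" by (auto simp: LL_def A_def)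
    show "(rhs_term has_sum R) A" "\<And>n. eqt n R (sum rhs_term (LL k n))"
      unfolding R_def using fam_trunc[of "LL k" A rhs_term, OF finite_LL sub zz] by auto
  qed
  have "Q * S = R"
  proof (rule eqt_ext)
    fix n
    have "eqt n (Q * S) (qpoch n * h n)" by (rule eqt_mult[OF qtr str])
    moreover have "h n = GG k 0 n" unfolding h_def GG_def f_eq by (simp add: mult.assoc)
    moreover have "sum rhs_term (LL k n) = sum (tm 0) (LL k n)" by (simp add: rhs_term_tm)
    ultimately show "eqt n (Q * S) R"
    proof -
      have c: "eqt n (sum rhs_term (LL k n)) (qpoch n * h n)"
        using claimP[of n n 0 k] \<open>h n = GG k 0 n\<close> \<open>sum rhs_term (LL k n) = sum (tm 0) (LL k n)\<close> by simp
      show ?thesis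
        by (rule eqt_trans[OF \<open>eqt n (Q * S) (qpoch n * h n)\<close> eqt_sym[OF eqt_trans[OF rtr c]]])
    qed
  qed
  have s1: "summable f" using fsums by (rule sums_summable)
  have s2: "suminf f = S" using fsums by (rule sums_unique[symmetric])
  have s3: "rhs_term summable_on A" using rsum unfolding summable_on_def by blast
  have s4: "infsum rhs_term A = R" using rsum by (rule infsumI)
  show ?thesis
    using conv s1 s3 \<open>Q * S = R\<close> unfolding qinf s2[symmetric] s4[symmetric] f_def A_def by simp
qed

end
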